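(* Let $F$ be a field, $n\ge 1$, and let $T\subseteq GL_n(F)$ be a split (not necessarily maximal) torus acting on $M_n(F)$ by conjugation $a\mapsto \tau a\tau^{-1}$. Let $X(T)$ be its character group (written additively, identity $0$), $W(T,M_n)\subseteq X(T)$ the set of weights of this action, $M_\omega$ the weight space of $\omega\in W(T,M_n)$ (so $M_n(F)=\bigoplus_{\omega\in W(T,M_n)}M_\omega$ and $M_0=\{a\in M_n(F):\tau a\tau^{-1}=a\ \forall \tau\in T\}$ is the centralizer of $T$), and $\pi_\omega:M_n(F)\to M_\omega$ the corresponding projections. Let $f:X(T)\otimes_{\mathbb Z}\mathbb Q\to\mathbb Q$ be a $\mathbb Q$-linear functional with $f(\omega)\ne 0$ for all $0\ne\omega\in W(T,M_n)$, and put $W_f^+=\{\omega\in W(T,M_n): f(\omega)>0\}$. Let $\Lambda\in T$ be such that $\mathrm{Tr}(\Lambda e)\neq 0$ for every nonzero idempotent $e\in M_0$. Let $V$ be an $F$-subspace of $M_n(F)$ such that both $V$ and $\pi_0(V)$ are contained in $\Lambda^\perp=\{b\in M_n(F):\mathrm{Tr}(\Lambda b)=0\}$, and such that $\pi_\omega(V)\,\pi_{-\omega'}(V)=0$ for all $\omega,\omega'\in W_f^+$ (i.e. $xy=0$ for all $x\in\pi_\omega(V)$, $y\in \pi_{-\omega'}(V)$). Then $V$ is a Mathieu subspace of $M_n(F)$.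
   Context: Let $\mathcal A$ be an associative algebra over a field $F$. An $F$-subspace $M\subseteq\mathcal A$ is a Mathieu subspace (MS) of $\mathcal A$ if for all $a,b,c\in\mathcal A$ such that $a^m\in M$ for all $m\ge 1$, there exists $N$ (depending on $a,b,c$) such that $ba^mc\in M$ for all $m\ge N$. An idempotent is an element $e$ with $e^2=e$. For a subset $S\subseteq M_n(F)$, $S^\perp=\{b\in M_n(F):\mathrm{Tr}(bx)=0 \text{ for all } x\in S\}$. The weights of the conjugation action of a split torus on $M_n(F)$ form a set closed under $\omega\mapsto-\omega$. *)

theory Defs
  imports "Jordan_Normal_Form.Matrix"
begin

definition mat_trace :: "'a::comm_ring_1 mat \<Rightarrow> 'a" where
  "mat_trace A = (\<Sum>i<dim_row A. A $$ (i, i))"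

definition is_subspace :: "nat \<Rightarrow> 'a::field mat set \<Rightarrow> bool" where
  "is_subspace n V \<longleftrightarrow> V \<subseteq> carrier_mat n n \<and> 0\<^sub>m n n \<in> V \<and>
     (\<forall>x\<in>V. \<forall>y\<in>V. x + y \<in> V) \<and> (\<forall>c. \<forall>x\<in>V. c \<cdot>\<^sub>m x \<in> V)"

definition mathieu_subspace :: "nat \<Rightarrow> 'a::field mat set \<Rightarrow> bool" where
  "mathieu_subspace n M \<longleftrightarrow> is_subspace n M \<and>
     (\<forall>a\<in>carrier_mat n n. \<forall>b\<in>carrier_mat n n. \<forall>c\<in>carrier_mat n n.
        (\<forall>m\<ge>1. a ^\<^sub>m m \<in> M) \<longrightarrow> (\<exists>N. \<forall>m\<ge>N. b * a ^\<^sub>m m * c \<in> M))"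

definition idempotent_mat :: "'a::field mat \<Rightarrow> bool" where
  "idempotent_mat e \<longleftrightarrow> e * e = e"

text \<open>Split torus in GL_n(F): the image of a homomorphism of algebraic groups
  G_m^r \<rightarrow> GL_n, which (after conjugation by an invertible P with inverse Pinv)
  is t \<mapsto> diag(\<chi>_{a_0}(t),...,\<chi>_{a_{n-1}}(t)), with a_i \<in> Z^r
  (a_i :: int vec of dimension r) and \<chi>_w(t) = \<Prod>_k t_k^{w_k}.
  The character group is (a sublattice of) Z^r, identity 0.\<close>
definition char_val :: "int vec \<Rightarrow> (nat \<Rightarrow> 'a::field) \<Rightarrow> 'a" where
  "char_val w t = (\<Prod>k<dim_vec w. t k powi (w $ k))"

definition torus_elem :: "nat \<Rightarrow> 'a::field mat \<Rightarrow> 'a mat \<Rightarrow> (nat \<Rightarrow> int vec)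
    \<Rightarrow> (nat \<Rightarrow> 'a) \<Rightarrow> 'a mat" where
  "torus_elem n P Pinv a t =
     P * mat n n (\<lambda>(i, j). if i = j then char_val (a i) t else 0) * Pinv"

definition torus :: "nat \<Rightarrow> nat \<Rightarrow> 'a::field mat \<Rightarrow> 'a mat \<Rightarrow> (nat \<Rightarrow> int vec) \<Rightarrow> 'a mat set" where
  "torus n r P Pinv a = {torus_elem n P Pinv a t | t. \<forall>k<r. t k \<noteq> 0}"

text \<open>Weights of the conjugation action of the torus on M_n(F):
  the basis element P E_ij Pinv has weight a_i - a_j.\<close>
definition weights :: "nat \<Rightarrow> (nat \<Rightarrow> int vec) \<Rightarrow> int vec set" where
  "weights n a = {a i - a j | i j. i < n \<and> j < n}"

definition wproj :: "nat \<Rightarrow> 'a::field mat \<Rightarrow> 'a mat \<Rightarrow> (nat \<Rightarrow> int vec) \<Rightarrow> int vec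
    \<Rightarrow> 'a mat \<Rightarrow> 'a mat" where
  "wproj n P Pinv a w x =
     P * mat n n (\<lambda>(i, j). if a i - a j = w then (Pinv * x * P) $$ (i, j) else 0) * Pinv"

definition wspace :: "nat \<Rightarrow> 'a::field mat \<Rightarrow> 'a mat \<Rightarrow> (nat \<Rightarrow> int vec) \<Rightarrow> int vec
    \<Rightarrow> 'a mat set" where
  "wspace n P Pinv a w = wproj n P Pinv a w ` carrier_mat n n"

definition perp_trace :: "nat \<Rightarrow> 'a::field mat \<Rightarrow> 'a mat set" where
  "perp_trace n L = {b \<in> carrier_mat n n. mat_trace (L * b) = 0}"

end

theory Submission imports Defs "Jordan_Normal_Form.Determinant" "HOL-Computational_Algebra.Computational_Algebra" begin

lemma mult_entry:
  assumes "A \<in> carrier_mat n n" "B \<in> carrier_mat n n" "i < n" "j < n"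
  shows "(A * B) $$ (i,j) = (\<Sum>m<n. A $$ (i,m) * B $$ (m,j))"
  using assms by (simp add: scalar_prod_def atLeast0LessThan row_def col_def)

lemma split3:
  fixes g :: "nat \<Rightarrow> 'b::linorder"
  shows "(\<Sum>m<n. h m) = (\<Sum>m\<in>{m. m<n \<and> g m < c}. h m) + (\<Sum>m\<in>{m. m<n \<and> g m = c}. h m)
     + (\<Sum>m\<in>{m. m<n \<and> g m > c}. h m)"
proof -
  have e: "{..<n} = ({m. m<n \<and> g m < c} \<union> {m. m<n \<and> g m = c}) \<union> {m. m<n \<and> g m > c}" by auto
  have 1: "sum h ({m. m<n \<and> g m < c} \<union> {m. m<n \<and> g m = c}) = sum h {m. m<n \<and> g m < c} + sum h {m. m<n \<and> g m = c}"
    by (rule sum.union_disjoint) auto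
  have 2: "sum h (({m. m<n \<and> g m < c} \<union> {m. m<n \<and> g m = c}) \<union> {m. m<n \<and> g m > c}) = sum h ({m. m<n \<and> g m < c} \<union> {m. m<n \<and> g m = c}) + sum h {m. m<n \<and> g m > c}"
    by (rule sum.union_disjoint) auto
  show ?thesis unfolding e 2 1 ..
qed

lemma group_zero:
  fixes g :: "nat \<Rightarrow> 'b::linorder" and h w :: "nat \<Rightarrow> 'a::comm_ring_1"
  assumes wc: "\<And>l l'. l<n \<Longrightarrow> l'<n \<Longrightarrow> g l = g l' \<Longrightarrow> w l = w l'"
    and hz: "\<And>l0. l0<n \<Longrightarrow> g l0 < c \<Longrightarrow> (\<Sum>l\<in>{l. l<n \<and> g l = g l0}. h l) = 0"
  shows "(\<Sum>l\<in>{l. l<n \<and> g l < c}. w l * h l) = 0"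
proof -
  let ?S = "{l. l<n \<and> g l < c}"
  have "(\<Sum>l\<in>?S. w l * h l) = (\<Sum>v\<in>g ` ?S. \<Sum>l\<in>{x\<in>?S. g x = v}. w l * h l)"
    by (rule sum.image_gen) auto
  also have "\<dots> = 0"
  proof (rule sum.neutral, rule ballI)
    fix v assume "v \<in> g ` ?S"
    then obtain l0 where l0: "l0 < n" "g l0 < c" "v = g l0" by auto
    have s: "{x\<in>?S. g x = v} = {l. l<n \<and> g l = g l0}" using l0 by auto
    have "(\<Sum>l\<in>{l. l<n \<and> g l = g l0}. w l * h l) = (\<Sum>l\<in>{l. l<n \<and> g l = g l0}. w l0 * h l)"
    proof (rule sum.cong)
      fix x assume "x \<in> {l. l<n \<and> g l = g l0}"
      hence "x < n" "g x = g l0" by auto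
      thus "w x * h x = w l0 * h x" using wc[OF _ l0(1)] by metis
    qed simp
    also have "\<dots> = w l0 * (\<Sum>l\<in>{l. l<n \<and> g l = g l0}. h l)" by (simp add: sum_distrib_left)
    also have "\<dots> = 0" using hz l0 by simp
    finally show "(\<Sum>l\<in>{x\<in>?S. g x = v}. w l * h l) = 0" unfolding s .
  qed
  finally show ?thesis .
qed


lemma trace_cyc:
  assumes A: "A \<in> carrier_mat n n" and B: "B \<in> carrier_mat n n"
  shows "mat_trace (A * B) = mat_trace (B * A)"
proof -
  have "mat_trace (A * B) = (\<Sum>i<n. (A*B) $$ (i,i))" using A B by (simp add: mat_trace_def)
  also have "\<dots> = (\<Sum>i<n. \<Sum>m<n. A $$ (i,m) * B $$ (m,i))"
    by (rule sum.cong, simp, rule mult_entry[OF A B], auto)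
  also have "\<dots> = (\<Sum>m<n. \<Sum>i<n. A $$ (i,m) * B $$ (m,i))"
    by (rule sum.swap)
  also have "\<dots> = (\<Sum>m<n. \<Sum>i<n. B $$ (m,i) * A $$ (i,m))"
    by (simp only: mult.commute)
  also have "\<dots> = (\<Sum>i<n. (B*A) $$ (i,i))"
    by (rule sum.cong, simp, rule mult_entry[OF B A, symmetric], auto)
  also have "\<dots> = mat_trace (B * A)" using A B by (simp add: mat_trace_def)
  finally show ?thesis .
qed

definition peval :: "nat \<Rightarrow> 'a::field poly \<Rightarrow> 'a mat \<Rightarrow> 'a mat" where
  "peval n p A = foldr (\<lambda>c M. c \<cdot>\<^sub>m 1\<^sub>m n + A * M) (coeffs p) (0\<^sub>m n n)"

lemma peval_0[simp]: "peval n 0 A = 0\<^sub>m n n"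
  by (simp add: peval_def)

lemma peval_pCons:
  assumes A: "A \<in> carrier_mat n n"
  shows "peval n (pCons c p) A = c \<cdot>\<^sub>m 1\<^sub>m n + A * peval n p A"
proof (cases "p = 0 \<and> c = 0")
  case True
  have "c \<cdot>\<^sub>m 1\<^sub>m n + A * 0\<^sub>m n n = 0\<^sub>m n n" using True A by (intro eq_matI) auto
  thus ?thesis using True by (simp add: peval_def)
next
  case False
  hence "coeffs (pCons c p) = c # coeffs p" by (auto simp: cCons_def)
  thus ?thesis by (simp add: peval_def)
qed

lemma peval_carrier[simp]:
  assumes A: "A \<in> carrier_mat n n"
  shows "peval n p A \<in> carrier_mat n n"
proof (induct p)
  case 0 thus ?case by simp
next
  case (pCons c p) thus ?case using A by (simp add: peval_pCons)
qed

lemma peval_add: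
  assumes A: "A \<in> carrier_mat n n"
  shows "peval n (p + q) A = peval n p A + peval n q A"
proof (induct p q rule: poly_induct2)
  case 0 thus ?case by (intro eq_matI) auto
next
  case (pCons a p b q)
  have P: "peval n p A \<in> carrier_mat n n" and Q: "peval n q A \<in> carrier_mat n n" using A by auto
  have "peval n (pCons a p + pCons b q) A = (a+b) \<cdot>\<^sub>m 1\<^sub>m n + A * (peval n p A + peval n q A)"
    using pCons A by (simp add: peval_pCons)
  also have "\<dots> = (a+b) \<cdot>\<^sub>m 1\<^sub>m n + (A * peval n p A + A * peval n q A)"
    by (simp add: mult_add_distrib_mat[OF A P Q])
  also have "\<dots> = (a \<cdot>\<^sub>m 1\<^sub>m n + A * peval n p A) + (b \<cdot>\<^sub>m 1\<^sub>m n + A * peval n q A)"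
    using A P Q by (intro eq_matI) (auto simp: algebra_simps carrier_matD[OF P] carrier_matD[OF Q])
  finally show ?case using A by (simp add: peval_pCons)
qed

lemma peval_smult:
  assumes A: "A \<in> carrier_mat n n"
  shows "peval n (smult a p) A = a \<cdot>\<^sub>m peval n p A"
proof (induct p)
  case 0 thus ?case by simp
next
  case (pCons c p)
  have P: "peval n p A \<in> carrier_mat n n" using A by auto
  have "peval n (smult a (pCons c p)) A = (a*c) \<cdot>\<^sub>m 1\<^sub>m n + A * (a \<cdot>\<^sub>m peval n p A)"
    using pCons A by (simp add: peval_pCons)
  also have "\<dots> = a \<cdot>\<^sub>m (c \<cdot>\<^sub>m 1\<^sub>m n + A * peval n p A)"
    using A P by (simp add: mult_smult_distrib[OF A P]) (intro eq_matI, auto simp: algebra_simps carrier_matD[OF P])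
  finally show ?case using A by (simp add: peval_pCons)
qed


lemma peval_mult:
  assumes A: "A \<in> carrier_mat n n"
  shows "peval n (p * q) A = peval n p A * peval n q A"
proof (induct p)
  case 0 thus ?case using A by (simp add: left_mult_zero_mat[OF peval_carrier[OF A]])
next
  case (pCons a p)
  have P: "peval n p A \<in> carrier_mat n n" and Q: "peval n q A \<in> carrier_mat n n" using A by auto
  have PQ: "peval n (p*q) A \<in> carrier_mat n n" using A by auto
  have "peval n (pCons a p * q) A = a \<cdot>\<^sub>m peval n q A + (0 \<cdot>\<^sub>m 1\<^sub>m n + A * (peval n p A * peval n q A))"
    using pCons A by (simp add: peval_add peval_smult peval_pCons)
  also have "\<dots> = a \<cdot>\<^sub>m peval n q A + A * (peval n p A * peval n q A)"
    using A P Q by (intro eq_matI) (auto simp: carrier_matD[OF P] carrier_matD[OF Q])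
  also have "\<dots> = (a \<cdot>\<^sub>m 1\<^sub>m n + A * peval n p A) * peval n q A"
    using A P Q by (simp add: add_mult_distrib_mat[of _ n n _ _ n] mult_smult_assoc_mat[of _ n n _ n] left_mult_one_mat[OF Q] assoc_mult_mat[OF A P Q])
  finally show ?case using A by (simp add: peval_pCons)
qed

lemma peval_1[simp]:
  assumes A: "A \<in> carrier_mat n n"
  shows "peval n 1 A = 1\<^sub>m n"
proof -
  have "peval n 1 A = peval n (pCons 1 0) A" by (simp add: one_pCons)
  also have "\<dots> = 1\<^sub>m n" using A by (subst peval_pCons[OF A]) (intro eq_matI, auto)
  finally show ?thesis .
qed

lemma peval_x[simp]:
  assumes A: "A \<in> carrier_mat n n"
  shows "peval n [:0,1:] A = A"
proof -
  have "peval n [:0,1:] A = 0 \<cdot>\<^sub>m 1\<^sub>m n + A * peval n 1 A" using A by (simp add: peval_pCons[OF A] one_pCons)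
  also have "\<dots> = 0 \<cdot>\<^sub>m 1\<^sub>m n + A * 1\<^sub>m n" using A by simp
  also have "\<dots> = A" using A by (intro eq_matI) auto
  finally show ?thesis .
qed

lemma peval_xpow:
  assumes A: "A \<in> carrier_mat n n"
  shows "peval n ([:0,1:]^k) A = A ^\<^sub>m k"
proof (induct k)
  case 0 thus ?case using A by simp
next
  case (Suc k)
  have "peval n ([:0,1:]^Suc k) A = peval n ([:0,1:]^k * [:0,1:]) A" by (simp only: power_Suc2)
  also have "\<dots> = A ^\<^sub>m k * A" using Suc by (simp only: peval_mult[OF A] peval_x[OF A])
  finally show ?case by simp
qed

lemma peval_diff:
  assumes A: "A \<in> carrier_mat n n"
  shows "peval n (p - q) A = peval n p A + (-1) \<cdot>\<^sub>m peval n q A"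
proof -
  have e: "p - q = p + smult (-1) q" by simp
  show ?thesis unfolding e using A by (simp only: peval_add[OF A] peval_smult[OF A])
qed

lemma peval_comm:
  assumes A: "A \<in> carrier_mat n n"
  shows "peval n p A * peval n q A = peval n q A * peval n p A"
  using A by (simp add: peval_mult[symmetric] mult.commute)

definition bdiag :: "nat \<Rightarrow> (nat \<Rightarrow> 'b) \<Rightarrow> 'a::field mat \<Rightarrow> bool" where
  "bdiag n g M \<longleftrightarrow> (\<forall>i<n. \<forall>j<n. g i \<noteq> g j \<longrightarrow> M $$ (i,j) = 0)"

lemma bdiag_mult:
  assumes M: "M \<in> carrier_mat n n" and N: "N \<in> carrier_mat n n"
    and bm: "bdiag n g M" and bn: "bdiag n g N"
  shows "bdiag n g (M * N)"
  unfolding bdiag_def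
proof (intro allI impI)
  fix i j assume ij: "i < n" "j < n" "g i \<noteq> g j"
  have "(M * N) $$ (i,j) = (\<Sum>m<n. M $$ (i,m) * N $$ (m,j))" using mult_entry[OF M N ij(1,2)] .
  also have "\<dots> = 0"
  proof (rule sum.neutral, rule ballI)
    fix m assume "m \<in> {..<n}"
    hence "m < n" by auto
    thus "M $$ (i,m) * N $$ (m,j) = 0" using bm bn ij unfolding bdiag_def by (cases "g i = g m") auto
  qed
  finally show "(M * N) $$ (i,j) = 0" .
qed

lemma bdiag_peval:
  assumes A: "A \<in> carrier_mat n n" and bA: "bdiag n g A"
  shows "bdiag n g (peval n p A)"
proof (induct p)
  case 0 thus ?case by (simp add: bdiag_def)
next
  case (pCons c p)
  have P: "peval n p A \<in> carrier_mat n n" using A by auto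
  have "bdiag n g (A * peval n p A)" by (rule bdiag_mult[OF A P bA pCons(2)])
  hence "bdiag n g (c \<cdot>\<^sub>m 1\<^sub>m n + A * peval n p A)" using A P unfolding bdiag_def by (auto simp: carrier_matD[OF P])
  thus ?case by (simp add: peval_pCons[OF A])
qed

lemma poly_id1:
  fixes x :: "'b::comm_ring_1"
  shows "(3*(x*x)-2*(x*x*x))*(3*(x*x)-2*(x*x*x)) = (3*(x*x)-2*(x*x*x)) + (x*x-x)*(x*x-x)*(4*(x*x)-4*x-3)"
  by (simp add: algebra_simps power2_eq_square power3_eq_cube)

lemma poly_id2:
  fixes x :: "'b::comm_ring_1"
  shows "3*(x*x)-2*(x*x*x) = x + (x*x-x) - (x*x-x)*x - (x*x-x)*x"
  by (simp add: algebra_simps power2_eq_square power3_eq_cube)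

lemma poly_id3:
  fixes x :: "'b::comm_ring_1"
  shows "x*x = x*x*(3*(x*x)-2*(x*x*x)) + (x*x-x)*(x*x-x)*(2*x+1)"
  by (simp add: algebra_simps power2_eq_square power3_eq_cube)


lemma sum_if_filter:
  fixes n :: nat shows "(\<Sum>m<n. if P m then f m else 0) = (\<Sum>m\<in>{m. m<n \<and> P m}. f m)"
proof -
  have "sum f {m\<in>{..<n}. P m} = (\<Sum>m<n. if P m then f m else 0)" by (rule sum.inter_filter) simp
  moreover have "{m\<in>{..<n}. P m} = {m. m<n \<and> P m}" by auto
  ultimately show ?thesis by simp
qed

lemma sum_if_filter2:
  fixes n :: nat shows "(\<Sum>m\<in>{m. m<n \<and> Q m}. if P m then f m else 0) = (\<Sum>m\<in>{m. m<n \<and> Q m \<and> P m}. f m)"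
proof -
  have "sum f {m\<in>{m. m<n \<and> Q m}. P m} = (\<Sum>m\<in>{m. m<n \<and> Q m}. if P m then f m else 0)" by (rule sum.inter_filter) simp
  moreover have "{m\<in>{m. m<n \<and> Q m}. P m} = {m. m<n \<and> Q m \<and> P m}" by auto
  ultimately show ?thesis by simp
qed

locale core =
  fixes n :: nat and g :: "nat \<Rightarrow> 'b::linorder" and e :: "'a::field mat" and lam :: "nat \<Rightarrow> 'a"
  assumes e_car: "e \<in> carrier_mat n n" and idem: "e * e = e"
    and star: "\<And>i j l0. i<n \<Longrightarrow> j<n \<Longrightarrow> l0<n \<Longrightarrow> g l0 < g i \<Longrightarrow> g l0 < g j \<Longrightarrow>
        (\<Sum>l\<in>{l. l<n \<and> g l = g l0}. e$$(i,l) * e$$(l,j)) = 0"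
    and lamc: "\<And>l l'. l<n \<Longrightarrow> l'<n \<Longrightarrow> g l = g l' \<Longrightarrow> lam l = lam l'"
    and tr0: "(\<Sum>i<n. lam i * e$$(i,i)) = 0"
    and hyp: "\<And>E. E \<in> carrier_mat n n \<Longrightarrow> bdiag n g E \<Longrightarrow> E * E = E \<Longrightarrow>
        (\<Sum>i<n. lam i * E$$(i,i)) = 0 \<Longrightarrow> E = 0\<^sub>m n n"
begin

lemma ent: "i<n \<Longrightarrow> j<n \<Longrightarrow> e$$(i,j) = (\<Sum>l<n. e$$(i,l) * e$$(l,j))"
  using mult_entry[OF e_car e_car, of i j] idem by simp

lemma below:
  assumes wc: "\<And>l l'. l<n \<Longrightarrow> l'<n \<Longrightarrow> g l = g l' \<Longrightarrow> w l = w l'"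
    and ij: "i<n" "j<n" "c \<le> g i" "c \<le> g j"
  shows "(\<Sum>l\<in>{l. l<n \<and> g l < c}. w l * (e$$(i,l) * e$$(l,j))) = 0"
proof -
  have "\<And>l0. l0<n \<Longrightarrow> g l0 < c \<Longrightarrow> (\<Sum>l\<in>{l. l<n \<and> g l = g l0}. e$$(i,l) * e$$(l,j)) = 0"
    using star ij by (meson order_less_le_trans)
  from group_zero[OF wc this] show ?thesis .
qed

lemma below1:
  assumes ij: "i<n" "j<n" "c \<le> g i" "c \<le> g j"
  shows "(\<Sum>l\<in>{l. l<n \<and> g l < c}. e$$(i,l) * e$$(l,j)) = 0"
  using below[of "\<lambda>_. 1", OF _ ij] by simp

lemma ent_split:
  assumes ij: "i<n" "j<n" "c \<le> g i" "c \<le> g j"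
  shows "e$$(i,j) = (\<Sum>l\<in>{l. l<n \<and> g l = c}. e$$(i,l) * e$$(l,j)) + (\<Sum>l\<in>{l. l<n \<and> g l > c}. e$$(i,l) * e$$(l,j))"
  using ent[OF ij(1,2)] split3[of "\<lambda>l. e$$(i,l) * e$$(l,j)" n g c] below1[OF ij] by simp

definition "Xm = mat n n (\<lambda>(i,j). if g i = g j then e$$(i,j) else 0)"
definition "qm = mat n n (\<lambda>(i,j). if g i = g j then - (\<Sum>k\<in>{k. k<n \<and> g k > g i}. e$$(i,k) * e$$(k,j)) else 0)"

lemma Xm_car[simp]: "Xm \<in> carrier_mat n n" by (simp add: Xm_def)
lemma qm_car[simp]: "qm \<in> carrier_mat n n" by (simp add: qm_def)
lemma Xm_bd: "bdiag n g Xm" by (simp add: Xm_def bdiag_def)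

lemma XX: "Xm * Xm = Xm + qm"
proof (rule eq_matI)
  fix i j assume i: "i < dim_row (Xm + qm)" and j: "j < dim_col (Xm + qm)"
  hence ij: "i<n" "j<n" by (auto simp: qm_def)
  have "(Xm * Xm) $$ (i,j) = (\<Sum>m<n. Xm $$ (i,m) * Xm $$ (m,j))" by (rule mult_entry) (use ij in auto)
  also have "\<dots> = (\<Sum>m<n. if g m = g i \<and> g i = g j then e$$(i,m) * e$$(m,j) else 0)"
    by (rule sum.cong) (use ij in \<open>auto simp: Xm_def\<close>)
  also have "\<dots> = (Xm + qm) $$ (i,j)"
  proof (cases "g i = g j")
    case True
    have "(\<Sum>m<n. if g m = g i \<and> g i = g j then e$$(i,m) * e$$(m,j) else 0)
        = (\<Sum>m\<in>{m. m<n \<and> g m = g i}. e$$(i,m) * e$$(m,j))"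
      using True by (simp add: sum_if_filter)
    also have "\<dots> = e$$(i,j) - (\<Sum>l\<in>{l. l<n \<and> g l > g i}. e$$(i,l) * e$$(l,j))"
      using ent_split[of i j "g i"] ij True by simp
    finally show ?thesis using ij True by (simp add: Xm_def qm_def)
  qed (use ij in \<open>simp add: Xm_def qm_def\<close>)
  finally show "(Xm * Xm) $$ (i,j) = (Xm + qm) $$ (i,j)" .
qed (auto simp: Xm_def qm_def)


lemma qq: "qm * qm = 0\<^sub>m n n"
proof (rule eq_matI)
  fix i j assume i: "i < dim_row (0\<^sub>m n n :: 'a mat)" and j: "j < dim_col (0\<^sub>m n n :: 'a mat)"
  hence ij: "i<n" "j<n" by auto
  let ?K = "{k. k<n \<and> g k > g i}" and ?C = "{m. m<n \<and> g m = g i}"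
  have "(qm * qm) $$ (i,j) = (\<Sum>m<n. qm $$ (i,m) * qm $$ (m,j))" by (rule mult_entry) (use ij in auto)
  also have "\<dots> = 0"
  proof (cases "g i = g j")
    case True
    have "(\<Sum>m<n. qm $$ (i,m) * qm $$ (m,j)) = (\<Sum>m<n. if g m = g i then
          (\<Sum>k\<in>?K. e$$(i,k) * e$$(k,m)) * (\<Sum>k'\<in>?K. e$$(m,k') * e$$(k',j)) else 0)"
      by (rule sum.cong) (use ij True in \<open>auto simp: qm_def\<close>)
    also have "\<dots> = (\<Sum>m\<in>?C. (\<Sum>k\<in>?K. e$$(i,k) * e$$(k,m)) * (\<Sum>k'\<in>?K. e$$(m,k') * e$$(k',j)))"
      by (rule sum_if_filter)
    also have "\<dots> = (\<Sum>m\<in>?C. \<Sum>k\<in>?K. \<Sum>k'\<in>?K. (e$$(i,k) * e$$(k,m)) * (e$$(m,k') * e$$(k',j)))"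
      by (simp add: sum_product)
    also have "\<dots> = (\<Sum>k\<in>?K. \<Sum>m\<in>?C. \<Sum>k'\<in>?K. (e$$(i,k) * e$$(k,m)) * (e$$(m,k') * e$$(k',j)))"
      by (rule sum.swap)
    also have "\<dots> = (\<Sum>k\<in>?K. \<Sum>k'\<in>?K. \<Sum>m\<in>?C. (e$$(i,k) * e$$(k,m)) * (e$$(m,k') * e$$(k',j)))"
      by (rule sum.cong, simp, rule sum.swap)
    also have "\<dots> = (\<Sum>k\<in>?K. \<Sum>k'\<in>?K. e$$(i,k) * (\<Sum>m\<in>?C. e$$(k,m) * e$$(m,k')) * e$$(k',j))"
      by (simp add: sum_distrib_left sum_distrib_right mult_ac)
    also have "\<dots> = 0"
    proof (rule sum.neutral, rule ballI, rule sum.neutral, rule ballI)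
      fix k k' assume "k \<in> ?K" "k' \<in> ?K"
      hence "(\<Sum>m\<in>?C. e$$(k,m) * e$$(m,k')) = 0" using star[of k k' i] ij by auto
      thus "e$$(i,k) * (\<Sum>m\<in>?C. e$$(k,m) * e$$(m,k')) * e$$(k',j) = 0" by simp
    qed
    finally show ?thesis .
  next
    case False
    show ?thesis by (rule sum.neutral) (use ij False in \<open>auto simp: qm_def\<close>)
  qed
  finally show "(qm * qm) $$ (i,j) = 0\<^sub>m n n $$ (i,j)" using ij by simp
qed (auto simp: qm_def)

definition "tlam M = (\<Sum>i<n. lam i * M$$(i,i))"

lemma tlam_add: "A \<in> carrier_mat n n \<Longrightarrow> B \<in> carrier_mat n n \<Longrightarrow> tlam (A + B) = tlam A + tlam B"
  by (simp add: tlam_def sum.distrib algebra_simps)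

lemma tlam_smult: "A \<in> carrier_mat n n \<Longrightarrow> tlam (c \<cdot>\<^sub>m A) = c * tlam A"
  by (simp add: tlam_def sum_distrib_left algebra_simps)

lemma tq: "tlam qm = 0"
proof -
  let ?F = "\<lambda>i k. if g i < g k then lam i * (e$$(k,i) * e$$(i,k)) else 0"
  have "tlam qm = (\<Sum>i<n. - (\<Sum>k<n. ?F i k))"
    unfolding tlam_def
  proof (rule sum.cong[OF refl])
    fix i assume "i \<in> {..<n}"
    hence i: "i < n" by auto
    have "(\<Sum>k<n. ?F i k) = (\<Sum>k\<in>{k. k<n \<and> g i < g k}. lam i * (e$$(k,i) * e$$(i,k)))"
      by (rule sum_if_filter)
    also have "\<dots> = lam i * (\<Sum>k\<in>{k. k<n \<and> g k > g i}. e$$(i,k) * e$$(k,i))"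
      by (simp add: sum_distrib_left mult_ac)
    finally show "lam i * qm $$ (i,i) = - (\<Sum>k<n. ?F i k)" using i by (simp add: qm_def)
  qed
  also have "\<dots> = - (\<Sum>i<n. \<Sum>k<n. ?F i k)" by (simp add: sum_negf)
  also have "(\<Sum>i<n. \<Sum>k<n. ?F i k) = (\<Sum>k<n. \<Sum>i<n. ?F i k)" by (rule sum.swap)
  also have "\<dots> = (\<Sum>k<n. \<Sum>i\<in>{i. i<n \<and> g i < g k}. lam i * (e$$(k,i) * e$$(i,k)))"
    by (rule sum.cong[OF refl], rule sum_if_filter)
  also have "\<dots> = 0"
  proof (rule sum.neutral, rule ballI)
    fix k assume "k \<in> {..<n}"
    hence k: "k<n" by auto
    show "(\<Sum>i\<in>{i. i<n \<and> g i < g k}. lam i * (e$$(k,i) * e$$(i,k))) = 0"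
      by (rule below[OF lamc k k order_refl order_refl])
  qed
  finally show ?thesis by simp
qed

lemma Zl:
  assumes k: "k<n" and l0: "l0<n" "g l0 < g k"
  shows "(\<Sum>i\<in>{l. l<n \<and> g l = g l0}. \<Sum>m\<in>{l. l<n \<and> g l = g l0}. e$$(k,m) * e$$(m,i) * e$$(i,k)) = 0"
proof -
  let ?C = "{l. l<n \<and> g l = g l0}" and ?A = "{l. l<n \<and> g l > g l0}"
  have "(\<Sum>i\<in>?C. \<Sum>m\<in>?C. e$$(k,m) * e$$(m,i) * e$$(i,k)) = (\<Sum>m\<in>?C. \<Sum>i\<in>?C. e$$(k,m) * e$$(m,i) * e$$(i,k))"
    by (rule sum.swap)
  also have "\<dots> = (\<Sum>m\<in>?C. e$$(k,m) * (\<Sum>i\<in>?C. e$$(m,i) * e$$(i,k)))"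
    by (simp add: sum_distrib_left mult_ac)
  also have "\<dots> = (\<Sum>m\<in>?C. e$$(k,m) * (e$$(m,k) - (\<Sum>i\<in>?A. e$$(m,i) * e$$(i,k))))"
  proof (rule sum.cong[OF refl])
    fix m assume "m \<in> ?C"
    hence m: "m<n" "g m = g l0" by auto
    have "e$$(m,k) = (\<Sum>i\<in>?C. e$$(m,i) * e$$(i,k)) + (\<Sum>i\<in>?A. e$$(m,i) * e$$(i,k))"
      using ent_split[of m k "g l0"] m k l0 by simp
    thus "e$$(k,m) * (\<Sum>i\<in>?C. e$$(m,i) * e$$(i,k)) = e$$(k,m) * (e$$(m,k) - (\<Sum>i\<in>?A. e$$(m,i) * e$$(i,k)))"
      by simp
  qed
  also have "\<dots> = (\<Sum>m\<in>?C. e$$(k,m) * e$$(m,k)) - (\<Sum>m\<in>?C. \<Sum>i\<in>?A. e$$(k,m) * e$$(m,i) * e$$(i,k))"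
    by (simp add: algebra_simps sum_subtractf sum_distrib_left)
  also have "(\<Sum>m\<in>?C. e$$(k,m) * e$$(m,k)) = 0" using star[of k k l0] k l0 by simp
  also have "(\<Sum>m\<in>?C. \<Sum>i\<in>?A. e$$(k,m) * e$$(m,i) * e$$(i,k)) = (\<Sum>i\<in>?A. \<Sum>m\<in>?C. e$$(k,m) * e$$(m,i) * e$$(i,k))"
    by (rule sum.swap)
  also have "\<dots> = (\<Sum>i\<in>?A. (\<Sum>m\<in>?C. e$$(k,m) * e$$(m,i)) * e$$(i,k))"
    by (simp add: sum_distrib_right)
  also have "\<dots> = 0"
  proof (rule sum.neutral, rule ballI)
    fix i assume "i \<in> ?A"
    hence "(\<Sum>m\<in>?C. e$$(k,m) * e$$(m,i)) = 0" using star[of k i l0] k l0 by auto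
    thus "(\<Sum>m\<in>?C. e$$(k,m) * e$$(m,i)) * e$$(i,k) = 0" by simp
  qed
  finally show ?thesis by simp
qed


lemma tqX: "tlam (qm * Xm) = 0"
proof -
  let ?T = "\<lambda>k i. (\<Sum>m\<in>{m. m<n \<and> g m = g i}. e$$(k,m) * e$$(m,i) * e$$(i,k))"
  have r1: "(qm*Xm)$$(i,i) = - (\<Sum>k<n. if g i < g k then ?T k i else 0)" if i: "i<n" for i
  proof -
    let ?K = "{k. k<n \<and> g k > g i}" and ?C = "{m. m<n \<and> g m = g i}"
    have "(qm*Xm)$$(i,i) = (\<Sum>m<n. qm $$ (i,m) * Xm $$ (m,i))" by (rule mult_entry) (use i in auto)
    also have "\<dots> = (\<Sum>m<n. if g m = g i then (- (\<Sum>k\<in>?K. e$$(i,k) * e$$(k,m))) * e$$(m,i) else 0)"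
      by (rule sum.cong) (use i in \<open>auto simp: qm_def Xm_def\<close>)
    also have "\<dots> = (\<Sum>m\<in>?C. (- (\<Sum>k\<in>?K. e$$(i,k) * e$$(k,m))) * e$$(m,i))"
      by (rule sum_if_filter)
    also have "\<dots> = - (\<Sum>m\<in>?C. \<Sum>k\<in>?K. e$$(i,k) * e$$(k,m) * e$$(m,i))"
      by (simp add: sum_negf sum_distrib_right)
    also have "(\<Sum>m\<in>?C. \<Sum>k\<in>?K. e$$(i,k) * e$$(k,m) * e$$(m,i)) = (\<Sum>k\<in>?K. \<Sum>m\<in>?C. e$$(i,k) * e$$(k,m) * e$$(m,i))"
      by (rule sum.swap)
    also have "\<dots> = (\<Sum>k\<in>?K. ?T k i)" by (simp add: mult_ac)
    also have "\<dots> = (\<Sum>k<n. if g i < g k then ?T k i else 0)" by (rule sum_if_filter[symmetric])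
    finally show ?thesis .
  qed
  have "tlam (qm * Xm) = (\<Sum>i<n. - (\<Sum>k<n. if g i < g k then lam i * ?T k i else 0))"
    unfolding tlam_def
  proof (rule sum.cong[OF refl])
    fix i assume "i \<in> {..<n}"
    hence i: "i<n" by auto
    show "lam i * (qm*Xm)$$(i,i) = - (\<Sum>k<n. if g i < g k then lam i * ?T k i else 0)"
      unfolding r1[OF i] by (simp add: sum_distrib_left if_distrib cong: if_cong)
  qed
  also have "\<dots> = - (\<Sum>i<n. \<Sum>k<n. if g i < g k then lam i * ?T k i else 0)" by (simp add: sum_negf)
  also have "(\<Sum>i<n. \<Sum>k<n. if g i < g k then lam i * ?T k i else 0) = (\<Sum>k<n. \<Sum>i<n. if g i < g k then lam i * ?T k i else 0)"
    by (rule sum.swap)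
  also have "\<dots> = (\<Sum>k<n. \<Sum>i\<in>{i. i<n \<and> g i < g k}. lam i * ?T k i)"
    by (rule sum.cong[OF refl], rule sum_if_filter)
  also have "\<dots> = 0"
  proof (rule sum.neutral, rule ballI)
    fix k assume "k \<in> {..<n}"
    hence k: "k<n" by auto
    have hz: "(\<Sum>i\<in>{l. l<n \<and> g l = g l0}. ?T k i) = 0" if l0: "l0<n" "g l0 < g k" for l0
    proof -
      have "(\<Sum>i\<in>{l. l<n \<and> g l = g l0}. ?T k i) = (\<Sum>i\<in>{l. l<n \<and> g l = g l0}. \<Sum>m\<in>{l. l<n \<and> g l = g l0}. e$$(k,m) * e$$(m,i) * e$$(i,k))"
        by (rule sum.cong[OF refl]) auto
      also have "\<dots> = 0" by (rule Zl[OF k l0])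
      finally show ?thesis .
    qed
    show "(\<Sum>i\<in>{i. i<n \<and> g i < g k}. lam i * ?T k i) = 0"
      by (rule group_zero[OF lamc hz]) auto
  qed
  finally show ?thesis by simp
qed

lemma Xm_eq_0_imp:
  assumes X2: "\<And>i j. i<n \<Longrightarrow> j<n \<Longrightarrow> g i = g j \<Longrightarrow> (\<Sum>m\<in>{m. m<n \<and> g m = g i}. e$$(i,m) * e$$(m,j)) = 0"
  shows "e = 0\<^sub>m n n"
proof -
  have main: "\<forall>i j. i<n \<longrightarrow> j<n \<longrightarrow> min (g i) (g j) = c \<longrightarrow> e$$(i,j) = 0" for c
  proof (induction "card {l. l<n \<and> c < g l}" arbitrary: c rule: less_induct)
    case less
    let ?C = "{m. m<n \<and> g m = c}"
    have hi: "e$$(i',j') = 0" if ij': "i'<n" "j'<n" "c < g i'" "c < g j'" for i' j'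
    proof -
      let ?c' = "min (g i') (g j')"
      have sub: "{l. l<n \<and> ?c' < g l} \<subset> {l. l<n \<and> c < g l}"
      proof
        have cc: "c < ?c'" using ij' by simp
        show "{l. l<n \<and> ?c' < g l} \<subseteq> {l. l<n \<and> c < g l}"
        proof
          fix x assume "x \<in> {l. l<n \<and> ?c' < g l}"
          hence x: "x<n" "?c' < g x" by auto
          from cc x(2) have "c < g x" by (rule less_trans)
          thus "x \<in> {l. l<n \<and> c < g l}" using x by auto
        qed
        have "?c' = g i' \<or> ?c' = g j'" by (simp add: min_def)
        then obtain w where w: "w<n" "g w = ?c'" using ij' by auto
        hence "w \<in> {l. l<n \<and> c < g l}" "w \<notin> {l. l<n \<and> ?c' < g l}" using ij' by auto
        thus "{l. l<n \<and> ?c' < g l} \<noteq> {l. l<n \<and> c < g l}" by blast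
      qed
      have "card {l. l<n \<and> ?c' < g l} < card {l. l<n \<and> c < g l}"
        by (rule psubset_card_mono[OF _ sub]) auto
      from less(1)[OF this] ij' show ?thesis by auto
    qed
    have A: "e$$(i,j) = 0" if ij: "i<n" "j<n" "g i = c" "c < g j" for i j
    proof -
      have col: "e$$(l,j) = (\<Sum>m\<in>?C. e$$(l,m) * e$$(m,j))" if l: "l<n" "g l = c" for l
      proof -
        have "(\<Sum>m\<in>{m. m<n \<and> g m > c}. e$$(l,m) * e$$(m,j)) = 0"
          by (rule sum.neutral) (use hi ij in auto)
        thus ?thesis using ent_split[of l j c] l ij by simp
      qed
      have "e$$(i,j) = (\<Sum>m\<in>?C. e$$(i,m) * e$$(m,j))" by (rule col[OF ij(1,3)])
      also have "\<dots> = (\<Sum>m\<in>?C. e$$(i,m) * (\<Sum>m'\<in>?C. e$$(m,m') * e$$(m',j)))"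
      proof (rule sum.cong[OF refl])
        fix m assume "m \<in> ?C"
        hence "m<n" "g m = c" by auto
        from col[OF this] show "e$$(i,m) * e$$(m,j) = e$$(i,m) * (\<Sum>m'\<in>?C. e$$(m,m') * e$$(m',j))" by simp
      qed
      also have "\<dots> = (\<Sum>m\<in>?C. \<Sum>m'\<in>?C. e$$(i,m) * e$$(m,m') * e$$(m',j))"
        by (simp add: sum_distrib_left mult_ac)
      also have "\<dots> = (\<Sum>m'\<in>?C. (\<Sum>m\<in>?C. e$$(i,m) * e$$(m,m')) * e$$(m',j))"
        by (subst sum.swap) (simp add: sum_distrib_right)
      also have "\<dots> = 0"
      proof (rule sum.neutral, rule ballI)
        fix m' assume "m' \<in> ?C"
        hence "(\<Sum>m\<in>?C. e$$(i,m) * e$$(m,m')) = 0" using X2[of i m'] ij by auto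
        thus "(\<Sum>m\<in>?C. e$$(i,m) * e$$(m,m')) * e$$(m',j) = 0" by simp
      qed
      finally show ?thesis .
    qed
    have B: "e$$(i,j) = 0" if ij: "i<n" "j<n" "g j = c" "c < g i" for i j
    proof -
      have row: "e$$(i,l) = (\<Sum>m\<in>?C. e$$(i,m) * e$$(m,l))" if l: "l<n" "g l = c" for l
      proof -
        have "(\<Sum>m\<in>{m. m<n \<and> g m > c}. e$$(i,m) * e$$(m,l)) = 0"
          by (rule sum.neutral) (use hi ij in auto)
        thus ?thesis using ent_split[of i l c] l ij by simp
      qed
      have "e$$(i,j) = (\<Sum>m\<in>?C. e$$(i,m) * e$$(m,j))" by (rule row[OF ij(2,3)])
      also have "\<dots> = (\<Sum>m\<in>?C. (\<Sum>m'\<in>?C. e$$(i,m') * e$$(m',m)) * e$$(m,j))"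
      proof (rule sum.cong[OF refl])
        fix m assume "m \<in> ?C"
        hence "m<n" "g m = c" by auto
        from row[OF this] show "e$$(i,m) * e$$(m,j) = (\<Sum>m'\<in>?C. e$$(i,m') * e$$(m',m)) * e$$(m,j)" by simp
      qed
      also have "\<dots> = (\<Sum>m\<in>?C. \<Sum>m'\<in>?C. e$$(i,m') * e$$(m',m) * e$$(m,j))"
        by (simp add: sum_distrib_right)
      also have "\<dots> = (\<Sum>m'\<in>?C. e$$(i,m') * (\<Sum>m\<in>?C. e$$(m',m) * e$$(m,j)))"
        by (subst sum.swap) (simp add: sum_distrib_left mult_ac)
      also have "\<dots> = 0"
      proof (rule sum.neutral, rule ballI)
        fix m' assume "m' \<in> ?C"
        hence "(\<Sum>m\<in>?C. e$$(m',m) * e$$(m,j)) = 0" using X2[of m' j] ij by auto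
        thus "e$$(i,m') * (\<Sum>m\<in>?C. e$$(m',m) * e$$(m,j)) = 0" by simp
      qed
      finally show ?thesis .
    qed
    have Cc: "e$$(i,j) = 0" if ij: "i<n" "j<n" "g i = c" "g j = c" for i j
    proof -
      have "(\<Sum>m\<in>{m. m<n \<and> g m > c}. e$$(i,m) * e$$(m,j)) = 0"
        by (rule sum.neutral) (use A ij in auto)
      moreover have "(\<Sum>m\<in>?C. e$$(i,m) * e$$(m,j)) = 0" using X2[of i j] ij by simp
      ultimately show ?thesis using ent_split[of i j c] ij by simp
    qed
    show ?case
    proof (intro allI impI)
      fix i j assume ij: "i<n" "j<n" "min (g i) (g j) = c"
      show "e$$(i,j) = 0"
      proof (cases "g i = g j")
        case True thus ?thesis using Cc ij by simp
      next
        case False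
        thus ?thesis using A B ij by (cases "g i < g j") (auto simp: min_def split: if_splits)
      qed
    qed
  qed
  show ?thesis
    by (rule eq_matI) (use main e_car in auto)
qed


lemma core_main: "e = 0\<^sub>m n n"
proof -
  define x :: "'a poly" where "x = [:0,1:]"
  define qp where "qp = x*x - x"
  define ep :: "'a poly" where "ep = 3*(x*x) - 2*(x*x*x)"
  have X: "Xm \<in> carrier_mat n n" by simp
  have px: "peval n x Xm = Xm" unfolding x_def by (rule peval_x[OF X])
  have Q: "peval n qp Xm = qm"
  proof -
    have "peval n qp Xm = Xm * Xm + (-1) \<cdot>\<^sub>m Xm"
      unfolding qp_def by (simp add: peval_diff[OF X] peval_mult[OF X] px)
    also have "\<dots> = qm" unfolding XX by (rule eq_matI) (auto simp: Xm_def qm_def)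
    finally show ?thesis .
  qed
  let ?EE = "peval n ep Xm"
  have EEc: "?EE \<in> carrier_mat n n" by (rule peval_carrier[OF X])
  have zq: "peval n qp Xm * peval n qp Xm = 0\<^sub>m n n" unfolding Q by (rule qq)
  have idE: "?EE * ?EE = ?EE"
  proof -
    let ?r = "4*(x*x)-4*x-3"
    have "?EE * ?EE = peval n (ep * ep) Xm" by (simp add: peval_mult[OF X])
    also have "ep * ep = ep + qp*qp*?r" unfolding ep_def qp_def by (rule poly_id1)
    also have "peval n (ep + qp*qp*?r) Xm = ?EE + 0\<^sub>m n n * peval n ?r Xm"
      by (simp add: peval_add[OF X] peval_mult[OF X] zq)
    also have "\<dots> = ?EE" using EEc by (simp add: left_mult_zero_mat[OF peval_carrier[OF X]])
    finally show ?thesis .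
  qed
  have trE: "tlam ?EE = 0"
  proof -
    have "ep = x + qp - qp*x - qp*x" unfolding ep_def qp_def by (rule poly_id2)
    hence "?EE = ((Xm + qm) + (-1) \<cdot>\<^sub>m (qm * Xm)) + (-1) \<cdot>\<^sub>m (qm * Xm)"
      by (simp only: peval_diff[OF X] peval_add[OF X] peval_mult[OF X] px Q)
    hence "tlam ?EE = tlam Xm + tlam qm + (-1) * tlam (qm*Xm) + (-1) * tlam (qm*Xm)"
      using mult_carrier_mat[OF qm_car Xm_car] by (simp add: tlam_add tlam_smult add_carrier_mat)
    also have "\<dots> = tlam Xm" by (simp add: tq tqX)
    also have "\<dots> = 0" using tr0 by (simp add: tlam_def Xm_def)
    finally show ?thesis .
  qed
  have E0: "?EE = 0\<^sub>m n n"
    by (rule hyp[OF EEc bdiag_peval[OF X Xm_bd] idE]) (use trE in \<open>simp add: tlam_def\<close>)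
  have XX0: "Xm * Xm = 0\<^sub>m n n"
  proof -
    let ?r = "2*x+1"
    have "Xm * Xm = peval n (x*x) Xm" by (simp add: peval_mult[OF X] px)
    also have "x*x = x*x*ep + qp*qp*?r" unfolding ep_def qp_def by (rule poly_id3)
    also have "peval n (x*x*ep + qp*qp*?r) Xm = Xm * Xm * 0\<^sub>m n n + 0\<^sub>m n n * peval n ?r Xm"
      by (simp add: peval_add[OF X] peval_mult[OF X] zq px E0)
    also have "\<dots> = 0\<^sub>m n n" using mult_carrier_mat[OF X X]
      by (simp add: left_mult_zero_mat[OF peval_carrier[OF X]] right_mult_zero_mat[of _ n n])
    finally show ?thesis .
  qed
  show ?thesis
  proof (rule Xm_eq_0_imp)
    fix i j assume ij: "i<n" "j<n" "g i = g j"
    have "(Xm * Xm) $$ (i,j) = (\<Sum>m<n. Xm $$ (i,m) * Xm $$ (m,j))" by (rule mult_entry) (use ij in auto)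
    also have "\<dots> = (\<Sum>m<n. if g m = g i then e$$(i,m) * e$$(m,j) else 0)"
      by (rule sum.cong) (use ij in \<open>auto simp: Xm_def\<close>)
    also have "\<dots> = (\<Sum>m\<in>{m. m<n \<and> g m = g i}. e$$(i,m) * e$$(m,j))" by (rule sum_if_filter)
    finally show "(\<Sum>m\<in>{m. m<n \<and> g m = g i}. e$$(i,m) * e$$(m,j)) = 0" using XX0 ij by simp
  qed
qed

end


lemma peval_monom:
  assumes A: "A \<in> carrier_mat n n"
  shows "peval n (monom c k) A = c \<cdot>\<^sub>m (A ^\<^sub>m k)"
  by (simp add: monom_altdef peval_smult[OF A] peval_xpow[OF A])

lemma peval_sum_entry:
  assumes A: "A \<in> carrier_mat n n" and ij: "i<n" "j<n"
  shows "(peval n (\<Sum>k<N. monom (c k) (Suc k)) A) $$ (i,j) = (\<Sum>k<N. c k * (A ^\<^sub>m Suc k) $$ (i,j))"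
proof (induct N)
  case 0 thus ?case using ij by simp
next
  case (Suc N)
  have "peval n (\<Sum>k<Suc N. monom (c k) (Suc k)) A = peval n (\<Sum>k<N. monom (c k) (Suc k)) A + c N \<cdot>\<^sub>m (A ^\<^sub>m Suc N)"
    by (simp add: peval_add[OF A] peval_monom[OF A])
  thus ?case using Suc ij A by simp
qed

lemma annihilator:
  fixes A :: "'a::field mat"
  assumes A: "A \<in> carrier_mat n n"
  shows "\<exists>p. p \<noteq> 0 \<and> coeff p 0 = 0 \<and> peval n p A = 0\<^sub>m n n"
proof -
  define N where "N = n*n + 1"
  define c where "c = (\<lambda>r. vec N (\<lambda>k. (A ^\<^sub>m Suc k) $$ (r div n, r mod n)) :: 'a vec)"
  define M where "M = mat\<^sub>r N N (\<lambda>r. if r = N - 1 then 0\<^sub>v N else c r)"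
  have Mc: "M \<in> carrier_mat N N" unfolding M_def by auto
  have "det M = 0" unfolding M_def
    by (rule det_row_0) (auto simp: N_def c_def)
  then obtain v where v: "v \<in> carrier_vec N" "v \<noteq> 0\<^sub>v N" "M *\<^sub>v v = 0\<^sub>v N"
    using det_0_iff_vec_prod_zero_field[OF Mc] by auto
  define p where "p = (\<Sum>k<N. monom (v $ k) (Suc k))"
  have "peval n p A = 0\<^sub>m n n"
  proof (rule eq_matI)
    fix i j assume "i < dim_row (0\<^sub>m n n :: 'a mat)" "j < dim_col (0\<^sub>m n n :: 'a mat)"
    hence ij: "i<n" "j<n" by auto
    define r where "r = i*n + j"
    have rdiv: "r div n = i" "r mod n = j" using ij by (auto simp: r_def)
    have "r < n*n"
    proof -
      have "i*n + j < i*n + n" using ij by simp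
      also have "\<dots> = (i+1)*n" by simp
      also have "\<dots> \<le> n*n" using ij by (intro mult_right_mono) auto
      finally show ?thesis unfolding r_def .
    qed
    hence r: "r < N" "r \<noteq> N - 1" by (auto simp: N_def)
    have "0 = (M *\<^sub>v v) $ r" using v r by simp
    also have "\<dots> = row M r \<bullet> v" using Mc r by simp
    also have "row M r = c r" unfolding M_def using r by (simp add: c_def)
    also have "c r \<bullet> v = (\<Sum>k<N. v $ k * (A ^\<^sub>m Suc k) $$ (i,j))"
      using v unfolding c_def scalar_prod_def by (auto simp: rdiv atLeast0LessThan mult.commute intro!: sum.cong)
    also have "\<dots> = (peval n p A) $$ (i,j)" unfolding p_def by (rule peval_sum_entry[OF A ij, symmetric])
    finally show "peval n p A $$ (i,j) = 0\<^sub>m n n $$ (i,j)" using ij by simp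
  qed (use peval_carrier[OF A, of p] in auto)
  moreover have "coeff p 0 = 0" unfolding p_def by (simp add: coeff_sum)
  moreover have "p \<noteq> 0"
  proof
    assume p0: "p = 0"
    have "v = 0\<^sub>v N"
    proof (rule eq_vecI)
      fix k assume "k < dim_vec (0\<^sub>v N :: 'a vec)"
      hence k: "k < N" by simp
      have "coeff p (Suc k) = (\<Sum>k'<N. if k' = k then v $ k' else 0)"
        unfolding p_def by (simp add: coeff_sum)
      also have "\<dots> = v $ k" using k by simp
      finally show "v $ k = 0\<^sub>v N $ k" using p0 k by simp
    qed (use v in auto)
    with v show False by simp
  qed
  ultimately show ?thesis by blast
qed

lemma powers_in_V:
  fixes A :: "'a::field mat"
  assumes A: "A \<in> carrier_mat n n" and V: "is_subspace n V" and pw: "\<forall>m\<ge>1. A ^\<^sub>m m \<in> V"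
  shows "k \<ge> 1 \<Longrightarrow> A ^\<^sub>m k * peval n p A \<in> V"
proof (induct p arbitrary: k)
  case 0
  have "A ^\<^sub>m k * peval n 0 A = 0\<^sub>m n n" using A by (simp add: right_mult_zero_mat[of _ n n])
  thus ?case using V by (simp add: is_subspace_def)
next
  case (pCons c p)
  have P: "peval n p A \<in> carrier_mat n n" using A by simp
  have Ak: "A ^\<^sub>m k \<in> carrier_mat n n" using A by simp
  have "A ^\<^sub>m k * peval n (pCons c p) A = A ^\<^sub>m k * (c \<cdot>\<^sub>m 1\<^sub>m n) + A ^\<^sub>m k * (A * peval n p A)"
    using A P by (simp add: peval_pCons[OF A] mult_add_distrib_mat[OF Ak _ mult_carrier_mat[OF A P]])
  also have "\<dots> = c \<cdot>\<^sub>m A ^\<^sub>m k + A ^\<^sub>m (Suc k) * peval n p A"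
    using A P Ak by (simp add: mult_smult_distrib[OF Ak one_carrier_mat] right_mult_one_mat[OF Ak] assoc_mult_mat[OF Ak A P])
  finally have eq: "A ^\<^sub>m k * peval n (pCons c p) A = c \<cdot>\<^sub>m A ^\<^sub>m k + A ^\<^sub>m (Suc k) * peval n p A" .
  have "c \<cdot>\<^sub>m A ^\<^sub>m k \<in> V" using V pw pCons(3) by (simp add: is_subspace_def)
  moreover have "A ^\<^sub>m (Suc k) * peval n p A \<in> V" using pCons(2)[of "Suc k"] by simp
  ultimately show ?case unfolding eq using V by (simp add: is_subspace_def)
qed

lemma bez_gen:
  fixes c d y :: "'b::comm_ring_1"
  assumes cd: "c * d = 1"
  shows "1 = (-(d*y))^K + (c + y) * (d * (\<Sum>i<K. (-(d*y))^i))"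
proof -
  let ?T = "(\<Sum>i<K. (-(d*y))^i)"
  have "(c + y) * (d * ?T) = (c*d) * ?T + (d*y) * ?T" by (simp add: algebra_simps)
  also have "\<dots> = (1 - (-(d*y))) * ?T" unfolding cd by (simp add: algebra_simps)
  also have "\<dots> = 1 - (-(d*y))^K" by (rule one_diff_power_eq[symmetric])
  finally show ?thesis by simp
qed

lemma fitting:
  fixes A :: "'a::field mat"
  assumes A: "A \<in> carrier_mat n n" and V: "is_subspace n V" and pw: "\<forall>m\<ge>1. A ^\<^sub>m m \<in> V"
    and noid: "\<And>E. E \<in> V \<Longrightarrow> E * E = E \<Longrightarrow> E = 0\<^sub>m n n"
  shows "\<exists>K. A ^\<^sub>m K = 0\<^sub>m n n"
proof -
  obtain p where p: "p \<noteq> 0" "coeff p 0 = 0" "peval n p A = 0\<^sub>m n n" using annihilator[OF A] by blast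
  define x :: "'a poly" where "x = [:0,1:]"
  define K where "K = order 0 p"
  obtain h where h: "p = x ^ K * h" "\<not> [:0,1:] dvd h"
    using order_decomp[OF p(1), of 0] unfolding x_def K_def by auto
  have "poly p 0 = 0" using p(2) by (simp add: poly_0_coeff_0)
  hence K1: "K \<ge> 1" using p(1) order_root[of p 0] unfolding K_def by auto
  obtain c h1 where hc: "h = pCons c h1" by (cases h) auto
  have c0: "c \<noteq> 0" using h(2) dvd_iff_poly_eq_0[of 0 h] unfolding hc by (simp add: poly_0_coeff_0)
  define d :: "'a poly" where "d = [:1/c:]"
  define y where "y = x * h1"
  define t where "t = -(d*y)"
  define S where "S = (\<Sum>i<K. t^i)"
  define r0 where "r0 = (-(d*h1))^K"
  have cd: "[:c:] * d = 1" using c0 unfolding d_def by (simp add: one_pCons)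
  have hy: "h = [:c:] + y" unfolding hc y_def x_def by simp
  have bz: "1 = t^K + h * (d*S)" unfolding t_def S_def hy by (rule bez_gen[OF cd])
  have tK: "t^K = r0 * x^K" unfolding t_def r0_def y_def by (simp add: power_mult_distrib[symmetric] mult_ac)
  define E where "E = peval n (t^K) A"
  define F where "F = peval n (h * (d*S)) A"
  have Ec: "E \<in> carrier_mat n n" and Fc: "F \<in> carrier_mat n n" using A by (auto simp: E_def F_def)
  have EF1: "E + F = 1\<^sub>m n" unfolding E_def F_def
    by (simp only: peval_add[OF A, symmetric] bz[symmetric] peval_1[OF A])
  have pe1: "t^K * (h * (d*S)) = (r0 * (d*S)) * p" by (simp add: tK h(1) mult_ac)
  have "E * F = peval n ((r0 * (d*S)) * p) A" unfolding E_def F_def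
    by (simp only: peval_mult[OF A, symmetric] pe1)
  also have "\<dots> = peval n (r0 * (d*S)) A * 0\<^sub>m n n" by (simp only: peval_mult[OF A, of "r0 * (d*S)" p] p(3))
  also have "\<dots> = 0\<^sub>m n n" by (rule right_mult_zero_mat[OF peval_carrier[OF A]])
  finally have EF0: "E * F = 0\<^sub>m n n" .
  have "E * E = E * (E + F)" using Ec Fc EF0 by (simp add: mult_add_distrib_mat[OF Ec Ec Fc])
  also have "\<dots> = E" using Ec by (simp add: EF1)
  finally have idE: "E * E = E" .
  have "E = peval n (x^K * r0) A" unfolding E_def tK by (simp add: mult.commute)
  also have "\<dots> = A ^\<^sub>m K * peval n r0 A" unfolding x_def by (simp add: peval_mult[OF A] peval_xpow[OF A])
  finally have "E \<in> V" using powers_in_V[OF A V pw K1] by simp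
  hence E0: "E = 0\<^sub>m n n" using idE noid by blast
  have AF: "A ^\<^sub>m K * F = 0\<^sub>m n n"
  proof -
    have pe2: "x^K * (h * (d*S)) = (d*S) * p" by (simp add: h(1) mult_ac)
    have "A ^\<^sub>m K * F = peval n (x^K * (h * (d*S))) A" unfolding F_def x_def
      by (simp only: peval_mult[OF A] peval_xpow[OF A])
    also have "\<dots> = peval n ((d*S) * p) A" by (simp only: pe2)
    also have "\<dots> = peval n (d*S) A * 0\<^sub>m n n" by (simp only: peval_mult[OF A, of "d*S" p] p(3))
    also have "\<dots> = 0\<^sub>m n n" by (rule right_mult_zero_mat[OF peval_carrier[OF A]])
    finally show ?thesis .
  qed
  have AK: "A ^\<^sub>m K \<in> carrier_mat n n" using A by simp
  have "A ^\<^sub>m K = A ^\<^sub>m K * (E + F)" using AK by (simp add: EF1 right_mult_one_mat[OF AK])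
  also have "\<dots> = A ^\<^sub>m K * E + A ^\<^sub>m K * F" by (rule mult_add_distrib_mat[OF AK Ec Fc])
  also have "\<dots> = 0\<^sub>m n n" using AK by (simp add: E0 AF right_mult_zero_mat[of _ n n])
  finally show ?thesis by blast
qed


lemma vec_sub_cancel:
  fixes u v w :: "int vec"
  assumes "u \<in> carrier_vec r" "v \<in> carrier_vec r" "w \<in> carrier_vec r"
  shows "(u - v = u - w) \<longleftrightarrow> v = w"
proof
  assume h: "u - v = u - w"
  show "v = w"
  proof (rule eq_vecI)
    fix k assume "k < dim_vec w"
    hence k: "k < r" using assms by auto
    have "(u - v) $ k = (u - w) $ k" using h by simp
    thus "v $ k = w $ k" using k assms by simp
  qed (use assms in auto)
qed simp

lemma vec_sub_neg:
  fixes v w z :: "int vec"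
  assumes "v \<in> carrier_vec r" "w \<in> carrier_vec r" "z \<in> carrier_vec r"
  shows "(v - z = - (z - w)) \<longleftrightarrow> v = w"
proof
  assume h: "v - z = - (z - w)"
  show "v = w"
  proof (rule eq_vecI)
    fix k assume "k < dim_vec w"
    hence k: "k < r" using assms by auto
    have "(v - z) $ k = (- (z - w)) $ k" using h by simp
    thus "v $ k = w $ k" using k assms by simp
  qed (use assms in auto)
next
  assume "v = w"
  thus "v - z = - (z - w)" using assms by (intro eq_vecI) auto
qed

lemma conj_mult:
  fixes P :: "'a::field mat"
  assumes P: "P \<in> carrier_mat n n" and Pi: "Pinv \<in> carrier_mat n n" and PP: "Pinv * P = 1\<^sub>m n"
    and X: "X \<in> carrier_mat n n" and Y: "Y \<in> carrier_mat n n"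
  shows "(P * X * Pinv) * (P * Y * Pinv) = P * (X * Y) * Pinv"
proof -
  have PPZ: "Pinv * (P * Z) = Z" if Z: "Z \<in> carrier_mat n n" for Z
  proof -
    have "Pinv * (P * Z) = (Pinv * P) * Z" using P Pi Z by (simp add: assoc_mult_mat[of _ n n _ n _ n])
    also have "\<dots> = Z" using Z by (simp add: PP left_mult_one_mat[OF Z])
    finally show ?thesis .
  qed
  have YP: "Y * Pinv \<in> carrier_mat n n" using Y Pi by simp
  show ?thesis using P Pi X Y by (simp add: assoc_mult_mat[of _ n n _ n _ n] PPZ[OF YP])
qed

lemma unconj:
  fixes P :: "'a::field mat"
  assumes P: "P \<in> carrier_mat n n" and Pi: "Pinv \<in> carrier_mat n n" and PP: "Pinv * P = 1\<^sub>m n"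
    and X: "X \<in> carrier_mat n n"
  shows "Pinv * (P * X * Pinv) * P = X"
proof -
  have "Pinv * (P * X * Pinv) * P = (Pinv * P) * X * (Pinv * P)"
    using P Pi X by (simp add: assoc_mult_mat[of _ n n _ n _ n])
  also have "\<dots> = X" using X by (simp add: PP left_mult_one_mat[OF X] right_mult_one_mat[OF X])
  finally show ?thesis .
qed

theorem theorem2p1:
  fixes n r :: nat
    and P Pinv Lam :: "'a::field mat"
    and a :: "nat \<Rightarrow> int vec"
    and f :: "rat vec"
    and V :: "'a mat set"
  assumes n_pos: "n \<ge> 1"
    and P_car: "P \<in> carrier_mat n n" and Pinv_car: "Pinv \<in> carrier_mat n n"
    and P_inv: "P * Pinv = 1\<^sub>m n"
    and a_dim: "\<forall>i<n. a i \<in> carrier_vec r"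
    and f_dim: "f \<in> carrier_vec r"
    and f_nonzero: "\<forall>w\<in>weights n a. w \<noteq> 0\<^sub>v r \<longrightarrow> f \<bullet> map_vec rat_of_int w \<noteq> 0"
    and Lam_T: "Lam \<in> torus n r P Pinv a"
    and Lam_idem: "\<forall>e\<in>wspace n P Pinv a (0\<^sub>v r). idempotent_mat e \<and> e \<noteq> 0\<^sub>m n n
                     \<longrightarrow> mat_trace (Lam * e) \<noteq> 0"
    and V_sub: "is_subspace n V"
    and V_perp: "V \<subseteq> perp_trace n Lam"
    and piV_perp: "wproj n P Pinv a (0\<^sub>v r) ` V \<subseteq> perp_trace n Lam"
    and V_prod: "\<forall>w\<in>{w\<in>weights n a. f \<bullet> map_vec rat_of_int w > 0}.
                 \<forall>w'\<in>{w\<in>weights n a. f \<bullet> map_vec rat_of_int w > 0}.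
                 \<forall>x\<in>V. \<forall>y\<in>V.
                   wproj n P Pinv a w x * wproj n P Pinv a (- w') y = 0\<^sub>m n n"
  shows "mathieu_subspace n V"
proof -
  have PP: "Pinv * P = 1\<^sub>m n" by (rule mat_mult_left_right_inverse[OF P_car Pinv_car P_inv])
  define g where "g = (\<lambda>i. f \<bullet> map_vec rat_of_int (a i))"
  have fdiff: "f \<bullet> map_vec rat_of_int (a i - a j) = g i - g j" if "i<n" "j<n" for i j
  proof -
    have ai: "a i \<in> carrier_vec r" "a j \<in> carrier_vec r" using a_dim that by auto
    have "map_vec rat_of_int (a i - a j) = map_vec rat_of_int (a i) - map_vec rat_of_int (a j)"
      using ai by (intro eq_vecI) (auto simp: carrier_vecD)
    thus ?thesis unfolding g_def using a_dim that f_dim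
      by (simp add: scalar_prod_minus_distrib[of f r])
  qed
  have wt: "a i - a j \<in> weights n a" if "i<n" "j<n" for i j using that unfolding weights_def by auto
  have cls: "a i = a j" if ij: "i<n" "j<n" "g i = g j" for i j
  proof (rule ccontr)
    assume "a i \<noteq> a j"
    hence "a i - a j \<noteq> 0\<^sub>v r"
      using vec_sub_cancel[of "a i" r "a j" "a i"] a_dim ij by (auto simp: minus_cancel_vec)
    hence "f \<bullet> map_vec rat_of_int (a i - a j) \<noteq> 0" using f_nonzero wt[OF ij(1,2)] by auto
    thus False using fdiff[OF ij(1,2)] ij(3) by simp
  qed
  obtain t where Lt: "Lam = torus_elem n P Pinv a t" using Lam_T unfolding torus_def by auto
  define lam where "lam = (\<lambda>i. char_val (a i) t)"
  define D where "D = mat n n (\<lambda>(i, j). if i = j then char_val (a i) t else (0::'a))"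
  have Dc: "D \<in> carrier_mat n n" by (simp add: D_def)
  have LD: "Lam = P * D * Pinv" unfolding Lt torus_elem_def D_def ..
  have trL: "mat_trace (Lam * x) = (\<Sum>i<n. lam i * (Pinv * x * P) $$ (i,i))" if x: "x \<in> carrier_mat n n" for x
  proof -
    have B: "Pinv * x * P \<in> carrier_mat n n" using x Pinv_car P_car by simp
    have "Lam * x = P * (D * Pinv * x)" unfolding LD using P_car Dc Pinv_car x
      by (simp add: assoc_mult_mat[of _ n n _ n _ n])
    hence "mat_trace (Lam * x) = mat_trace ((D * Pinv * x) * P)"
      using trace_cyc[OF P_car, of "D * Pinv * x"] Dc Pinv_car x by simp
    also have "(D * Pinv * x) * P = D * (Pinv * x * P)" using P_car Dc Pinv_car x
      by (simp add: assoc_mult_mat[of _ n n _ n _ n])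
    also have "mat_trace (D * (Pinv * x * P)) = (\<Sum>i<n. (D * (Pinv * x * P)) $$ (i,i))"
      using Dc by (simp add: mat_trace_def)
    also have "\<dots> = (\<Sum>i<n. lam i * (Pinv * x * P) $$ (i,i))"
    proof (rule sum.cong[OF refl])
      fix i assume "i \<in> {..<n}"
      hence i: "i<n" by auto
      have "(D * (Pinv * x * P)) $$ (i,i) = (\<Sum>m<n. D $$ (i,m) * (Pinv * x * P) $$ (m,i))"
        by (rule mult_entry[OF Dc B i i])
      also have "\<dots> = (\<Sum>m<n. if m = i then lam i * (Pinv * x * P) $$ (m,i) else 0)"
        by (rule sum.cong) (use i in \<open>auto simp: D_def lam_def\<close>)
      also have "\<dots> = lam i * (Pinv * x * P) $$ (i,i)" using i by simp
      finally show "(D * (Pinv * x * P)) $$ (i,i) = lam i * (Pinv * x * P) $$ (i,i)" .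
    qed
    finally show ?thesis .
  qed
  define Mk where "Mk = (\<lambda>w x. mat n n (\<lambda>(i, j). if a i - a j = w then (Pinv * x * P) $$ (i, j) else (0::'a)))"
  have wpMk: "wproj n P Pinv a w x = P * Mk w x * Pinv" for w x unfolding wproj_def Mk_def ..
  have Mkc: "Mk w x \<in> carrier_mat n n" for w x by (simp add: Mk_def)
  have noid: "e = 0\<^sub>m n n" if eV: "e \<in> V" and ee: "e * e = e" for e
  proof -
    have ec: "e \<in> carrier_mat n n" using eV V_sub by (auto simp: is_subspace_def)
    define e' where "e' = Pinv * e * P"
    have e'c: "e' \<in> carrier_mat n n" using ec P_car Pinv_car by (simp add: e'_def)
    have ee': "e = P * e' * Pinv"
    proof -
      have "P * e' * Pinv = (P * Pinv) * e * (P * Pinv)" unfolding e'_def using ec P_car Pinv_car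
        by (simp add: assoc_mult_mat[of _ n n _ n _ n])
      also have "\<dots> = e" using ec by (simp add: P_inv left_mult_one_mat[OF ec] right_mult_one_mat[OF ec])
      finally show ?thesis by simp
    qed
    have "core n g e' lam"
    proof
      show "e' \<in> carrier_mat n n" by (rule e'c)
      show "e' * e' = e'"
        using conj_mult[OF Pinv_car P_car P_inv ec ec] ee unfolding e'_def by simp
      show "(\<Sum>l\<in>{l. l<n \<and> g l = g l0}. e'$$(i,l) * e'$$(l,j)) = 0"
        if ij: "i<n" "j<n" "l0<n" "g l0 < g i" "g l0 < g j" for i j l0
      proof -
        let ?w = "a i - a l0" and ?w' = "a j - a l0"
        have w1: "?w \<in> {w\<in>weights n a. f \<bullet> map_vec rat_of_int w > 0}"
          using wt[OF ij(1,3)] fdiff[OF ij(1,3)] ij by simp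
        have w2: "?w' \<in> {w\<in>weights n a. f \<bullet> map_vec rat_of_int w > 0}"
          using wt[OF ij(2,3)] fdiff[OF ij(2,3)] ij by simp
        have "wproj n P Pinv a ?w e * wproj n P Pinv a (- ?w') e = 0\<^sub>m n n"
          using V_prod w1 w2 eV by blast
        hence "P * (Mk ?w e * Mk (- ?w') e) * Pinv = 0\<^sub>m n n"
          unfolding wpMk using conj_mult[OF P_car Pinv_car PP Mkc Mkc] by simp
        hence "Pinv * (P * (Mk ?w e * Mk (- ?w') e) * Pinv) * P = 0\<^sub>m n n"
          using P_car Pinv_car by simp
        hence MM: "Mk ?w e * Mk (- ?w') e = 0\<^sub>m n n"
          using unconj[OF P_car Pinv_car PP mult_carrier_mat[OF Mkc Mkc]] by simp
        have "(Mk ?w e * Mk (- ?w') e) $$ (i,j) = (\<Sum>l<n. Mk ?w e $$ (i,l) * Mk (- ?w') e $$ (l,j))"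
          by (rule mult_entry[OF Mkc Mkc ij(1,2)])
        also have "\<dots> = (\<Sum>l<n. if g l = g l0 then e'$$(i,l) * e'$$(l,j) else 0)"
        proof (rule sum.cong[OF refl])
          fix l assume "l \<in> {..<n}"
          hence l: "l<n" by auto
          have c1: "(a i - a l = ?w) \<longleftrightarrow> a l = a l0"
            using vec_sub_cancel[of "a i" r "a l" "a l0"] a_dim ij l by auto
          have c2: "(a l - a j = - ?w') \<longleftrightarrow> a l = a l0"
            using vec_sub_neg[of "a l" r "a l0" "a j"] a_dim ij l by auto
          have c3: "a l = a l0 \<longleftrightarrow> g l = g l0" using cls[OF l ij(3)] unfolding g_def by auto
          show "Mk ?w e $$ (i,l) * Mk (- ?w') e $$ (l,j) = (if g l = g l0 then e'$$(i,l) * e'$$(l,j) else 0)"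
            using ij l c1 c2 c3 by (simp add: Mk_def e'_def)
        qed
        also have "\<dots> = (\<Sum>l\<in>{l. l<n \<and> g l = g l0}. e'$$(i,l) * e'$$(l,j))" by (rule sum_if_filter)
        finally show ?thesis using MM ij by simp
      qed
      show "lam l = lam l'" if "l<n" "l'<n" "g l = g l'" for l l'
        using cls[OF that] unfolding lam_def by simp
      show "(\<Sum>i<n. lam i * e'$$(i,i)) = 0"
        using trL[OF ec] eV V_perp unfolding e'_def perp_trace_def by auto
      show "E = 0\<^sub>m n n" if Ec: "E \<in> carrier_mat n n" and bd: "bdiag n g E" and EE: "E * E = E"
        and trE: "(\<Sum>i<n. lam i * E$$(i,i)) = 0" for E
      proof -
        define e0 where "e0 = P * E * Pinv"
        have e0c: "e0 \<in> carrier_mat n n" using Ec P_car Pinv_car by (simp add: e0_def)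
        have un: "Pinv * e0 * P = E" unfolding e0_def by (rule unconj[OF P_car Pinv_car PP Ec])
        have "Mk (0\<^sub>v r) e0 = E"
        proof (rule eq_matI)
          fix i j assume "i < dim_row E" "j < dim_col E"
          hence ij: "i<n" "j<n" using Ec by auto
          show "Mk (0\<^sub>v r) e0 $$ (i,j) = E $$ (i,j)"
          proof (cases "a i = a j")
            case True
            hence "a i - a j = 0\<^sub>v r" using a_dim ij by (intro eq_vecI) auto
            thus ?thesis using ij un by (simp add: Mk_def)
          next
            case False
            hence "a i - a j \<noteq> 0\<^sub>v r"
              using vec_sub_cancel[of "a i" r "a j" "a i"] a_dim ij by (auto simp: minus_cancel_vec)
            moreover have "g i \<noteq> g j" using False cls ij by blast
            ultimately show ?thesis using ij bd by (simp add: Mk_def bdiag_def)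
          qed
        qed (use Ec in \<open>auto simp: Mk_def\<close>)
        hence "wproj n P Pinv a (0\<^sub>v r) e0 = e0" unfolding wpMk e0_def by simp
        hence e0w: "e0 \<in> wspace n P Pinv a (0\<^sub>v r)" unfolding wspace_def using e0c by (metis image_eqI)
        have "e0 * e0 = e0" unfolding e0_def using conj_mult[OF P_car Pinv_car PP Ec Ec] EE by simp
        hence idm: "idempotent_mat e0" by (simp add: idempotent_mat_def)
        have "mat_trace (Lam * e0) = 0" using trL[OF e0c] un trE by simp
        hence "e0 = 0\<^sub>m n n" using Lam_idem e0w idm by blast
        hence "Pinv * e0 * P = 0\<^sub>m n n" using P_car Pinv_car by simp
        thus ?thesis using un by simp
      qed
    qed
    hence "e' = 0\<^sub>m n n" by (rule core.core_main)
    thus ?thesis unfolding ee' using P_car Pinv_car by simp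
  qed
  show ?thesis
    unfolding mathieu_subspace_def
  proof (intro conjI V_sub ballI impI)
    fix A b c :: "'a mat"
    assume A: "A \<in> carrier_mat n n" and b: "b \<in> carrier_mat n n" and c: "c \<in> carrier_mat n n"
      and pw: "\<forall>m\<ge>1. A ^\<^sub>m m \<in> V"
    obtain K where K: "A ^\<^sub>m K = 0\<^sub>m n n" using fitting[OF A V_sub pw noid] by blast
    have "A ^\<^sub>m m = 0\<^sub>m n n" if "m \<ge> K" for m
      using that
    proof (induct m rule: dec_induct)
      case base thus ?case by (rule K)
    next
      case (step m) thus ?case using A by simp
    qed
    hence "b * A ^\<^sub>m m * c \<in> V" if "m \<ge> K" for m
      using that b c V_sub by (simp add: is_subspace_def)
    thus "\<exists>N. \<forall>m\<ge>N. b * A ^\<^sub>m m * c \<in> V" by blast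
  qed
qed

end
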